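(* Let $\mathbb{K}$ be a field of characteristic zero, let $p,q\in\mathbb{Z}^n_{\ge0}$ be nonzero vectors and let $\beta,\gamma\in\mathbb{K}^n$ be nonzero, non-proportional vectors. Suppose $\langle\beta,q\rangle=0$ and let $r\in\mathbb{Z}_{\ge0}$ be the smallest number such that $\langle\gamma,p+rq\rangle=0$. Then the Lie algebra $\mathfrak{g}(\Delta^q_\gamma,\Delta^p_\beta)$ generated by $\Delta^q_\gamma$ and $\Delta^p_\beta$ has dimension $r+2$ and is $(r+1)$-step nilpotent; moreover, the derivations $\Delta^q_\gamma,\Delta^p_\beta,\Delta^{p+q}_\beta,\ldots,\Delta^{p+rq}_\beta$ form a basis of this Lie algebra.
   Context: For $p\in\mathbb{Z}^n_{\ge0}$ and $\beta\in\mathbb{K}^n$, $\Delta^p_\beta:=x_1^{p_1}\cdots x_n^{p_n}\sum_{j=1}^n\beta_jx_j\partial_j$ (a derivation of $\mathbb{K}[x_1,\ldots,x_n]$, $\partial_j=\partial/\partial x_j$). $\langle\beta,u\rangle:=\sum_i\beta_iu_i$. The Lie bracket is the commutator of derivations. *)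

theory Defs
  imports Complex_Main "HOL-Library.Poly_Mapping" "HOL-Library.Function_Algebras"
begin

text \<open>Polynomials in the variables x_i (i ranging over the finite type 'n, so n = CARD('n))
  with coefficients in 'a: finitely supported maps from exponent vectors ('n => nat) to 'a.\<close>
type_synonym ('n, 'a) kpoly = "('n \<Rightarrow> nat) \<Rightarrow>\<^sub>0 'a"

type_synonym ('n, 'a) kop = "('n, 'a) kpoly \<Rightarrow> ('n, 'a) kpoly"

definition pscale :: "'a::field \<Rightarrow> ('n, 'a) kpoly \<Rightarrow> ('n, 'a) kpoly" where
  "pscale c f = Poly_Mapping.map (\<lambda>v. c * v) f"

definition xmon :: "('n \<Rightarrow> nat) \<Rightarrow> ('n, 'a::field) kpoly" where
  "xmon u = Poly_Mapping.single u 1"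

definition xvar :: "'n \<Rightarrow> ('n, 'a::field) kpoly" where
  "xvar j = xmon (\<lambda>i. if i = j then 1 else 0)"

definition pdiff :: "'n \<Rightarrow> ('n, 'a::field) kpoly \<Rightarrow> ('n, 'a) kpoly" where
  "pdiff j f = (\<Sum>m\<in>Poly_Mapping.keys f.
      Poly_Mapping.single (\<lambda>i. if i = j then m i - 1 else m i) (of_nat (m j) * Poly_Mapping.lookup f m))"

definition Delta :: "('n::finite \<Rightarrow> nat) \<Rightarrow> ('n \<Rightarrow> 'a::field) \<Rightarrow> ('n, 'a) kop" where
  "Delta p \<beta> f = xmon p * (\<Sum>j\<in>UNIV. pscale (\<beta> j) (xvar j * pdiff j f))"

definition pair :: "('n::finite \<Rightarrow> 'a::field) \<Rightarrow> ('n \<Rightarrow> nat) \<Rightarrow> 'a" where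
  "pair \<beta> u = (\<Sum>i\<in>UNIV. \<beta> i * of_nat (u i))"

definition lie :: "('n, 'a::field) kop \<Rightarrow> ('n, 'a) kop \<Rightarrow> ('n, 'a) kop" where
  "lie D E = (\<lambda>f. D (E f) - E (D f))"

definition oscale :: "'a::field \<Rightarrow> ('n, 'a) kop \<Rightarrow> ('n, 'a) kop" where
  "oscale c D = (\<lambda>f. pscale c (D f))"

inductive_set lie_gen :: "('n, 'a::field) kop set \<Rightarrow> ('n, 'a) kop set" for S where
  gen: "D \<in> S \<Longrightarrow> D \<in> lie_gen S"
| zero: "0 \<in> lie_gen S"
| add: "D \<in> lie_gen S \<Longrightarrow> E \<in> lie_gen S \<Longrightarrow> D + E \<in> lie_gen S"
| scale: "D \<in> lie_gen S \<Longrightarrow> oscale c D \<in> lie_gen S"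
| bracket: "D \<in> lie_gen S \<Longrightarrow> E \<in> lie_gen S \<Longrightarrow> lie D E \<in> lie_gen S"

text \<open>Lower central series: lcs g 0 = g (= g^1), lcs g (k+1) = span [g, lcs g k] (= g^(k+2)).\<close>
fun lcs :: "('n, 'a::field) kop set \<Rightarrow> nat \<Rightarrow> ('n, 'a) kop set" where
  "lcs g 0 = g"
| "lcs g (Suc k) = module.span oscale {lie D E | D E. D \<in> g \<and> E \<in> lcs g k}"

definition step_nilpotent :: "('n, 'a::field) kop set \<Rightarrow> nat \<Rightarrow> bool" where
  "step_nilpotent g s \<longleftrightarrow> s \<ge> 1 \<and> lcs g s = {0} \<and> lcs g (s - 1) \<noteq> {0}"

end

theory Submission
  imports Defs
begin

definition Op :: "('n \<Rightarrow> nat) \<Rightarrow> (('n \<Rightarrow> nat) \<Rightarrow> 'a::field) \<Rightarrow> ('n, 'a) kop" where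
  "Op a \<phi> f = (\<Sum>m\<in>Poly_Mapping.keys f. Poly_Mapping.single (a + m) (\<phi> m * Poly_Mapping.lookup f m))"

lemma add_eq_iff_fun: "((a::'n \<Rightarrow> nat) + m = k) \<longleftrightarrow> (a \<le> k \<and> m = k - a)"
  unfolding le_fun_def fun_eq_iff by (auto simp: fun_diff_def) (metis le_add1, metis diff_add_inverse)

lemma lookup_Op: "Poly_Mapping.lookup (Op a \<phi> f) k =
   (if a \<le> k then \<phi> (k - a) * Poly_Mapping.lookup f (k - a) else 0)"
proof -
  have "Poly_Mapping.lookup (Op a \<phi> f) k =
     (\<Sum>m\<in>Poly_Mapping.keys f. if m = k - a \<and> a \<le> k then \<phi> m * Poly_Mapping.lookup f m else 0)"
    unfolding Op_def lookup_sum lookup_single when_def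
    by (intro sum.cong refl) (auto simp: add_eq_iff_fun)
  also have "\<dots> = (if a \<le> k then \<phi> (k - a) * Poly_Mapping.lookup f (k - a) else 0)"
    by (cases "a \<le> k") (auto simp: sum.delta' in_keys_iff)
  finally show ?thesis .
qed

lemma Op_eqI: "(\<And>k. Poly_Mapping.lookup (D f) k = Poly_Mapping.lookup (Op a \<phi> f) k) \<Longrightarrow> D f = Op a \<phi> f"
  by (rule poly_mapping_eqI)

lemma Op_add: "Op a \<phi> (f + g) = Op a \<phi> f + Op a \<phi> g"
  by (rule poly_mapping_eqI) (simp add: lookup_Op lookup_add distrib_left)

lemma lookup_pscale: "Poly_Mapping.lookup (pscale c f) k = c * Poly_Mapping.lookup f k"
  unfolding pscale_def by transfer (simp add: when_def)

lemma Op_pscale: "Op a \<phi> (pscale c f) = pscale c (Op a \<phi> f)"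
  by (rule poly_mapping_eqI) (simp add: lookup_Op lookup_pscale)

lemma Op_comp: "Op b \<psi> (Op a \<phi> f) = Op (a + b) (\<lambda>m. \<psi> (a + m) * \<phi> m) f"
proof (rule poly_mapping_eqI)
  fix k
  show "Poly_Mapping.lookup (Op b \<psi> (Op a \<phi> f)) k = Poly_Mapping.lookup (Op (a + b) (\<lambda>m. \<psi> (a + m) * \<phi> m) f) k"
  proof (cases "a + b \<le> k")
    case True
    then have 1: "b \<le> k" "a \<le> k - b" "k - b - a = k - (a+b)" "a + (k - (a+b)) = k - b"
      by (auto simp: le_fun_def fun_eq_iff fun_diff_def) (metis add_leD2, metis add_leD2 le_diff_conv2)
    then show ?thesis by (simp add: lookup_Op True mult.assoc)
  next
    case False
    then have "\<not> (b \<le> k \<and> a \<le> k - b)" by (auto simp: le_fun_def fun_diff_def) (metis le_diff_conv2)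
    then show ?thesis by (auto simp: lookup_Op False)
  qed
qed

lemma pm_expand: "h = (\<Sum>m\<in>Poly_Mapping.keys h. Poly_Mapping.single m (Poly_Mapping.lookup h m))"
  by (rule poly_mapping_eqI) (simp add: lookup_sum lookup_single when_def sum.delta in_keys_iff)

lemma xmon_mult: "xmon a * h = Op a (\<lambda>_. 1) h"
proof -
  have "xmon a * h = xmon a * (\<Sum>m\<in>Poly_Mapping.keys h. Poly_Mapping.single m (Poly_Mapping.lookup h m))"
    by (subst pm_expand[of h]) simp
  also have "\<dots> = Op a (\<lambda>_. 1) h"
    unfolding sum_distrib_left xmon_def mult_single Op_def by simp
  finally show ?thesis .
qed

lemma lookup_xvar_pdiff: fixes j :: 'n and f :: "('n, 'a::field) kpoly" shows "Poly_Mapping.lookup (xvar j * pdiff j f) k = of_nat (k j) * Poly_Mapping.lookup f k"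
proof -
  have "xvar j * pdiff j f = (\<Sum>m\<in>Poly_Mapping.keys f. Poly_Mapping.single m (of_nat (m j) * Poly_Mapping.lookup f m))"
    unfolding xvar_def xmon_def pdiff_def sum_distrib_left mult_single
  proof (intro sum.cong refl)
    fix m :: "'n \<Rightarrow> nat"
    show "Poly_Mapping.single ((\<lambda>i. if i = j then 1 else 0) + (\<lambda>i. if i = j then m i - 1 else m i)) (1 * (of_nat (m j) * Poly_Mapping.lookup f m))
       = Poly_Mapping.single m (of_nat (m j) * Poly_Mapping.lookup f m)"
    proof (cases "m j = 0")
      case False
      then have "(\<lambda>i. if i = j then 1 else 0) + (\<lambda>i. if i = j then m i - 1 else m i) = m"
        by (auto simp: fun_eq_iff)
      then show ?thesis by simp
    qed simp
  qed
  then show ?thesis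
    by (simp add: lookup_sum lookup_single when_def sum.delta in_keys_iff)
qed

lemma Delta_Op: "Delta a \<alpha> = Op a (pair \<alpha>)"
proof
  fix f
  have "(\<Sum>j\<in>UNIV. pscale (\<alpha> j) (xvar j * pdiff j f)) = Op 0 (pair \<alpha>) f"
    by (rule poly_mapping_eqI)
      (simp add: lookup_sum lookup_pscale lookup_xvar_pdiff lookup_Op pair_def sum_distrib_right mult.assoc)
  then show "Delta a \<alpha> f = Op a (pair \<alpha>) f"
    unfolding Delta_def xmon_mult by (simp add: Op_comp)
qed

lemma pscale_add: "pscale c (f + g) = pscale c f + pscale c g"
  by (rule poly_mapping_eqI) (simp add: lookup_pscale lookup_add distrib_left)
lemma pscale_diff: "pscale c (f - g) = pscale c f - pscale c g"
  by (rule poly_mapping_eqI) (simp add: lookup_pscale lookup_minus right_diff_distrib)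
lemma pscale_ldistrib: "pscale (c + d) f = pscale c f + pscale d f"
  by (rule poly_mapping_eqI) (simp add: lookup_pscale lookup_add distrib_right)
lemma pscale_pscale: "pscale c (pscale d f) = pscale (c * d) f"
  by (rule poly_mapping_eqI) (simp add: lookup_pscale)
lemma pscale_one: "pscale 1 f = f"
  by (rule poly_mapping_eqI) (simp add: lookup_pscale)
lemma pscale_zero: "pscale c 0 = 0"
  by (rule poly_mapping_eqI) (simp add: lookup_pscale)

interpretation OS: vector_space "oscale :: 'a::field \<Rightarrow> ('n, 'a) kop \<Rightarrow> ('n, 'a) kop"
  by unfold_locales (simp_all add: oscale_def fun_eq_iff pscale_add pscale_ldistrib pscale_pscale pscale_one)

lemma Op_diff_fun: "Op c \<phi> f - Op c \<psi> f = Op c (\<lambda>m. \<phi> m - \<psi> m) f"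
  by (rule poly_mapping_eqI) (simp add: lookup_Op lookup_minus left_diff_distrib)

lemma oscale_Op: "oscale c (Op a \<phi>) = Op a (\<lambda>m. c * \<phi> m)"
  unfolding oscale_def
  by (rule ext, rule poly_mapping_eqI) (simp add: lookup_Op lookup_pscale mult.assoc)

lemma Op_zero_fun: "Op a (\<lambda>_. 0) = 0"
  by (rule ext, rule poly_mapping_eqI) (simp add: lookup_Op)

lemma lie_Op: "lie (Op a \<phi>) (Op b \<psi>) = Op (a + b) (\<lambda>m. \<phi> (b + m) * \<psi> m - \<psi> (a + m) * \<phi> m)"
  unfolding lie_def by (rule ext) (simp add: Op_comp Op_diff_fun add.commute)

lemma pair_add: "pair \<alpha> (u + v) = pair \<alpha> u + pair \<alpha> v"
  by (simp add: pair_def distrib_left sum.distrib)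

lemma pair_lin: "pair (\<lambda>i. s * \<beta> i - t * \<alpha> i) m = s * pair \<beta> m - t * pair \<alpha> m"
  by (simp add: pair_def sum_distrib_left sum_subtractf left_diff_distrib mult.assoc)

lemma lie_Delta: "lie (Delta a \<alpha>) (Delta b \<beta>) = Delta (a + b) (\<lambda>i. pair \<alpha> b * \<beta> i - pair \<beta> a * \<alpha> i)"
  unfolding Delta_Op lie_Op pair_lin pair_add
  by (rule arg_cong[where f="Op (a+b)"]) (simp add: fun_eq_iff algebra_simps)

lemma Delta_scale: "Delta a (\<lambda>i. c * \<beta> i) = oscale c (Delta a \<beta>)"
proof -
  have "pair (\<lambda>i. c * \<beta> i) = (\<lambda>m. c * pair \<beta> m)"
    by (rule ext) (simp add: pair_def sum_distrib_left mult.assoc)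
  then show ?thesis unfolding Delta_Op oscale_Op by simp
qed

lemma Delta_zero: "Delta a (\<lambda>i. 0) = 0"
  unfolding Delta_Op pair_def by (simp add: Op_zero_fun)

definition lin :: "('n, 'a::field) kop \<Rightarrow> bool" where
  "lin D \<longleftrightarrow> (\<forall>f g. D (f + g) = D f + D g) \<and> (\<forall>c f. D (pscale c f) = pscale c (D f))"

lemma lin_Op: "lin (Op a \<phi>)"
  unfolding lin_def by (simp add: Op_add Op_pscale)

lemma lin_Delta: "lin (Delta a \<alpha>)"
  unfolding Delta_Op by (rule lin_Op)

lemma lin_zero_app: "lin D \<Longrightarrow> D 0 = 0"
  unfolding lin_def by (metis add_cancel_right_right add_0)

lemma lin_subspace: "OS.subspace (Collect lin)"
  unfolding OS.subspace_def lin_def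
  by (auto simp: oscale_def pscale_add pscale_pscale mult.commute pscale_zero)

lemma lie_add_left: "lin E \<Longrightarrow> lie (D1 + D2) E = lie D1 E + lie D2 E"
  unfolding lie_def lin_def by (auto simp: fun_eq_iff)
lemma lie_add_right: "lin D \<Longrightarrow> lie D (E1 + E2) = lie D E1 + lie D E2"
  unfolding lie_def lin_def by (auto simp: fun_eq_iff)
lemma lie_scale_left: "lin E \<Longrightarrow> lie (oscale c D) E = oscale c (lie D E)"
  unfolding lie_def lin_def oscale_def by (auto simp: fun_eq_iff pscale_diff)
lemma lie_scale_right: "lin D \<Longrightarrow> lie D (oscale c E) = oscale c (lie D E)"
  unfolding lie_def lin_def oscale_def by (auto simp: fun_eq_iff pscale_diff)
lemma lie_zero_left: "lin E \<Longrightarrow> lie 0 E = 0"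
  unfolding lie_def by (auto simp: fun_eq_iff lin_zero_app)
lemma lie_zero_right: "lin D \<Longrightarrow> lie D 0 = 0"
  unfolding lie_def by (auto simp: fun_eq_iff lin_zero_app)
lemma lie_self: "lie D D = 0"
  unfolding lie_def by (auto simp: fun_eq_iff)
lemma lie_anti: "lie E D = - lie D E"
  unfolding lie_def by (auto simp: fun_eq_iff)

lemma span_lin: "X \<subseteq> Collect lin \<Longrightarrow> x \<in> OS.span X \<Longrightarrow> lin x"
  using OS.span_minimal[OF _ lin_subspace] by blast

lemma lie_span_right:
  assumes X: "lin x" and Y: "Y \<subseteq> Collect lin" and W: "OS.subspace W"
    and H: "\<And>y. y \<in> Y \<Longrightarrow> lie x y \<in> W" and y: "y \<in> OS.span Y"
  shows "lie x y \<in> W"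
proof -
  have "y \<in> {y. lin y \<and> lie x y \<in> W}"
  proof (rule OS.span_subspace_induct[OF y])
    show "OS.subspace {y. lin y \<and> lie x y \<in> W}"
      using W lin_subspace X unfolding OS.subspace_def
      by (auto simp: lie_add_right lie_scale_right lie_zero_right)
  qed (use H Y in auto)
  then show ?thesis by simp
qed

lemma lie_span:
  assumes X: "X \<subseteq> Collect lin" and Y: "Y \<subseteq> Collect lin" and W: "OS.subspace W"
    and H: "\<And>x y. x \<in> X \<Longrightarrow> y \<in> Y \<Longrightarrow> lie x y \<in> W"
    and x: "x \<in> OS.span X" and y: "y \<in> OS.span Y"
  shows "lie x y \<in> W"
proof -
  have "x \<in> {x. lin x \<and> (\<forall>y\<in>OS.span Y. lie x y \<in> W)}"
  proof (rule OS.span_subspace_induct[OF x])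
    show "OS.subspace {x. lin x \<and> (\<forall>y\<in>OS.span Y. lie x y \<in> W)}"
      using W lin_subspace span_lin[OF Y] unfolding OS.subspace_def
      by (auto simp: lie_add_left lie_scale_left lie_zero_left)
  next
    fix x assume "x \<in> X"
    then show "x \<in> {x. lin x \<and> (\<forall>y\<in>OS.span Y. lie x y \<in> W)}"
      using X lie_span_right[OF _ Y W H] by auto
  qed
  then show ?thesis using y by simp
qed

lemma sum_fun_app: "(\<Sum>a\<in>A. F a) x = (\<Sum>a\<in>A. F a x)"
  by (induct A rule: infinite_finite_induct) auto

definition ev :: "'n \<Rightarrow> 'n \<Rightarrow> nat" where "ev i = (\<lambda>j. if j = i then 1 else 0)"

lemma pair_ev: "pair \<alpha> (ev i) = \<alpha> i"
  by (simp add: pair_def ev_def if_distrib cong: if_cong)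

lemma Delta_xvar: "Delta a \<alpha> (xvar i) = Poly_Mapping.single (a + ev i) (\<alpha> i)"
  unfolding Delta_Op Op_def xvar_def xmon_def ev_def[symmetric]
  by (simp add: pair_ev)

lemma Delta_eq:
  assumes "\<alpha> \<noteq> 0" "Delta a \<alpha> = Delta b \<beta>"
  shows "a = b \<and> \<alpha> = \<beta>"
proof -
  have E: "Poly_Mapping.single (a + ev i) (\<alpha> i) = Poly_Mapping.single (b + ev i) (\<beta> i)" for i
    using assms(2) Delta_xvar by metis
  obtain i0 where i0: "\<alpha> i0 \<noteq> 0" using assms(1) by (auto simp: fun_eq_iff)
  have "Poly_Mapping.lookup (Poly_Mapping.single (a + ev i0) (\<alpha> i0)) (a + ev i0) \<noteq> 0"
    using i0 by simp
  then have "Poly_Mapping.lookup (Poly_Mapping.single (b + ev i0) (\<beta> i0)) (a + ev i0) \<noteq> 0"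
    using E[of i0] by simp
  then have "b + ev i0 = a + ev i0" by (auto simp: lookup_single when_def split: if_splits)
  then have ab: "a = b" by simp
  have "\<alpha> i = \<beta> i" for i
    using arg_cong[OF E[of i], of "\<lambda>h. Poly_Mapping.lookup h (a + ev i)"] ab by simp
  with ab show ?thesis by auto
qed

lemma Delta_nonzero: "\<alpha> \<noteq> 0 \<Longrightarrow> Delta a \<alpha> \<noteq> 0"
proof
  assume "\<alpha> \<noteq> 0" "Delta a \<alpha> = 0"
  then obtain i where "\<alpha> i \<noteq> 0" by (auto simp: fun_eq_iff)
  moreover have "Delta a \<alpha> (xvar i) = 0" using \<open>Delta a \<alpha> = 0\<close> by simp
  ultimately show False by (metis Delta_xvar lookup_single_eq lookup_zero)
qed

lemma indep_Deltas:
  assumes A: "finite A" and \<alpha>: "\<alpha> \<noteq> 0"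
  shows "OS.independent ((\<lambda>a. Delta a \<alpha>) ` A)"
proof -
  have inj: "inj_on (\<lambda>a. Delta a \<alpha>) A"
    using Delta_eq[OF \<alpha>] by (auto simp: inj_on_def)
  obtain i where i: "\<alpha> i \<noteq> 0" using \<alpha> by (auto simp: fun_eq_iff)
  show ?thesis
  proof (rule OS.independent_if_scalars_zero)
    show "finite ((\<lambda>a. Delta a \<alpha>) ` A)" using A by simp
  next
    fix c v assume H: "(\<Sum>v\<in>(\<lambda>a. Delta a \<alpha>) ` A. oscale (c v) v) = 0" and v: "v \<in> (\<lambda>a. Delta a \<alpha>) ` A"
    then obtain b where b: "b \<in> A" "v = Delta b \<alpha>" by auto
    have "(\<Sum>a\<in>A. oscale (c (Delta a \<alpha>)) (Delta a \<alpha>)) = 0"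
      using H by (simp add: sum.reindex[OF inj])
    then have "Poly_Mapping.lookup ((\<Sum>a\<in>A. oscale (c (Delta a \<alpha>)) (Delta a \<alpha>)) (xvar i)) (b + ev i) = 0"
      by simp
    then have "(\<Sum>a\<in>A. c (Delta a \<alpha>) * (if a = b then \<alpha> i else 0)) = 0"
      by (simp add: sum_fun_app lookup_sum oscale_def lookup_pscale Delta_xvar lookup_single when_def)
    then have "c (Delta b \<alpha>) * \<alpha> i = 0"
      using b(1) by (simp add: if_distrib sum.delta' A cong: if_cong)
    then show "c v = 0" using i b by simp
  qed
qed

theorem proposition2:
  fixes p q :: "'n::finite \<Rightarrow> nat"
    and \<beta> \<gamma> :: "'n \<Rightarrow> 'a::field_char_0"
    and r :: nat
  assumes "p \<noteq> 0" and "q \<noteq> 0"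
    and "\<beta> \<noteq> 0" and "\<gamma> \<noteq> 0"
    and "\<forall>c. \<beta> \<noteq> (\<lambda>i. c * \<gamma> i)" and "\<forall>c. \<gamma> \<noteq> (\<lambda>i. c * \<beta> i)"
    and "pair \<beta> q = 0"
    and "pair \<gamma> (\<lambda>i. p i + r * q i) = 0"
    and "\<forall>k<r. pair \<gamma> (\<lambda>i. p i + k * q i) \<noteq> 0"
  shows "vector_space.dim oscale (lie_gen {Delta q \<gamma>, Delta p \<beta>}) = r + 2
    \<and> step_nilpotent (lie_gen {Delta q \<gamma>, Delta p \<beta>}) (r + 1)
    \<and> (let B = insert (Delta q \<gamma>) ((\<lambda>k. Delta (\<lambda>i. p i + k * q i) \<beta>) ` {0..r}) in
         card B = r + 2 \<and> module.independent oscale B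
         \<and> module.span oscale B = lie_gen {Delta q \<gamma>, Delta p \<beta>})"
proof -
  note assms1 = assms
  define P where "P k = (\<lambda>i. p i + k * q i)" for k :: nat
  define F where "F k = Delta (P k) \<beta>" for k
  define D0 where "D0 = Delta q \<gamma>"
  define B where "B = insert D0 (F ` {0..r})"
  define g where "g = lie_gen {D0, F 0}"
  have P0: "P 0 = p" by (simp add: P_def)
  have eqB: "insert (Delta q \<gamma>) ((\<lambda>k. Delta (\<lambda>i. p i + k * q i) \<beta>) ` {0..r}) = B"
    by (simp add: B_def F_def P_def D0_def)
  have eqg: "lie_gen {Delta q \<gamma>, Delta p \<beta>} = g"
    by (simp add: g_def D0_def F_def P0)
  have pairP: "pair \<alpha> (P k) = pair \<alpha> p + of_nat k * pair \<alpha> q" for \<alpha> k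
    by (simp add: P_def pair_def sum.distrib sum_distrib_left algebra_simps)
  have pbP: "pair \<beta> (P k) = pair \<beta> p" for k by (simp add: pairP assms(7))
  have Psuc: "q + P k = P (Suc k)" for k by (simp add: P_def fun_eq_iff)
  have br1: "lie D0 (F k) = oscale (pair \<gamma> (P k)) (F (Suc k))" for k
    unfolding D0_def F_def lie_Delta Psuc using assms(7) by (simp add: Delta_scale)
  have br2: "lie (F j) (F k) = 0" for j k
    unfolding F_def lie_Delta pbP by (simp add: Delta_zero)
  have br3: "lie (F j) D0 = oscale (- pair \<gamma> (P j)) (F (Suc j))" for j
    using br1[of j] lie_anti[of "F j" D0] by (simp add: OS.scale_minus_left)
  have br4: "lie D0 D0 = 0" by (rule lie_self)
  have linF: "lin (F k)" for k by (simp add: F_def lin_Delta)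
  have linD0: "lin D0" by (simp add: D0_def lin_Delta)
  have linB: "B \<subseteq> Collect lin" using linF linD0 by (auto simp: B_def)
  have cnz: "pair \<gamma> (P k) \<noteq> 0" if "k < r" for k using assms(9) that by (simp add: P_def)
  have cr: "pair \<gamma> (P r) = 0" using assms(8) by (simp add: P_def)
  have Fsuc: "F (Suc k) = oscale (1 / pair \<gamma> (P k)) (lie D0 (F k))" if "k < r" for k
    using cnz[OF that] by (simp add: br1)
  have FinB: "F k \<in> B" if "k \<le> r" for k using that by (auto simp: B_def)
  have D0g: "D0 \<in> g" by (simp add: g_def lie_gen.gen)
  have Fg: "k \<le> r \<longrightarrow> F k \<in> g" for k
  proof (induction k)
    case 0
    then show ?case by (simp add: g_def lie_gen.gen)
  next
    case (Suc k)
    show ?case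
    proof
      assume "Suc k \<le> r"
      then have "k < r" by simp
      then have "F k \<in> g" using Suc by simp
      then have "lie D0 (F k) \<in> g" using D0g unfolding g_def by (rule lie_gen.bracket[rotated])
      then show "F (Suc k) \<in> g" unfolding Fsuc[OF \<open>k < r\<close>] g_def by (rule lie_gen.scale)
    qed
  qed
  have Bg: "B \<subseteq> g" using D0g Fg by (auto simp: B_def)
  have subg: "OS.subspace g"
    unfolding OS.subspace_def g_def by (auto intro: lie_gen.zero lie_gen.add lie_gen.scale)
  have spanB_g: "OS.span B \<subseteq> g" by (rule OS.span_minimal[OF Bg subg])
  define L where "L m = OS.span (F ` {m..r})" for m
  have brA: "lie x y \<in> L (Suc m)" if xB: "x \<in> B" and yF: "y \<in> F ` {m..r}" for x y m
  proof -
    obtain k where k: "m \<le> k" "k \<le> r" "y = F k" using yF by auto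
    show ?thesis
    proof (cases "x = D0")
      case True
      show ?thesis
      proof (cases "k < r")
        case True
        then have "F (Suc k) \<in> L (Suc m)" unfolding L_def using k
          by (intro OS.span_base) auto
        then show ?thesis using \<open>x = D0\<close> k br1 OS.span_scale L_def by metis
      next
        case False
        then have "k = r" using k by simp
        then show ?thesis using \<open>x = D0\<close> k br1 cr L_def OS.span_zero by simp
      qed
    next
      case False
      then obtain j where "x = F j" using xB by (auto simp: B_def)
      then show ?thesis using k br2 L_def OS.span_zero by simp
    qed
  qed
  have brB: "lie x y \<in> L 1" if xB: "x \<in> B" and yB: "y \<in> B" for x y
  proof (cases "y = D0")
    case False
    then have "y \<in> F ` {0..r}" using yB by (auto simp: B_def)
    then show ?thesis using brA[OF xB] by simp
  next
    case True
    show ?thesis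
    proof (cases "x = D0")
      case True
      then show ?thesis using \<open>y = D0\<close> br4 L_def OS.span_zero by simp
    next
      case False
      then obtain j where j: "x = F j" "j \<le> r" using xB by (auto simp: B_def)
      show ?thesis
      proof (cases "j < r")
        case True
        then have "F (Suc j) \<in> L 1" unfolding L_def by (intro OS.span_base) auto
        then show ?thesis using \<open>y = D0\<close> j br3 OS.span_scale L_def by metis
      next
        case False
        then have "j = r" using j by simp
        then show ?thesis using \<open>y = D0\<close> j br3 cr L_def OS.span_zero by simp
      qed
    qed
  qed
  have L1B: "L 1 \<subseteq> OS.span B" unfolding L_def B_def by (intro OS.span_mono) auto
  have g_spanB: "g \<subseteq> OS.span B"
  proof
    fix x assume "x \<in> g"
    then show "x \<in> OS.span B" unfolding g_def
    proof (induction rule: lie_gen.induct)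
      case (gen D)
      then show ?case using FinB[of 0] by (auto simp: B_def intro: OS.span_base)
    next
      case zero
      then show ?case by (rule OS.span_zero)
    next
      case (add D E)
      show ?case by (rule OS.span_add[OF add.IH])
    next
      case (scale D c)
      show ?case by (rule OS.span_scale[OF scale.IH])
    next
      case (bracket D E)
      have "lie D E \<in> L 1"
        by (rule lie_span[OF linB linB _ brB bracket.IH]) (simp add: L_def)
      then show ?case using L1B by auto
    qed
  qed
  have geq: "g = OS.span B" using g_spanB spanB_g by auto
  define Y where "Y m = (if m = 0 then B else F ` {m..r})" for m
  have linY: "Y m \<subseteq> Collect lin" for m using linB linF by (auto simp: Y_def)
  have lcsY: "lcs g m = OS.span (Y m)" for m
  proof (induction m)
    case 0
    then show ?case by (simp add: Y_def geq)
  next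
    case (Suc m)
    let ?G = "{lie D E |D E. D \<in> g \<and> E \<in> OS.span (Y m)}"
    have YS: "Y (Suc m) = F ` {Suc m..r}" by (simp add: Y_def)
    have "OS.span ?G \<subseteq> OS.span (Y (Suc m))"
    proof (rule OS.span_minimal)
      show "?G \<subseteq> OS.span (Y (Suc m))"
      proof clarify
        fix D E assume D: "D \<in> g" and E: "E \<in> OS.span (Y m)"
        have "D \<in> OS.span B" using D geq by simp
        then show "lie D E \<in> OS.span (Y (Suc m))"
        proof (rule lie_span[OF linB linY OS.subspace_span _ _ E, rotated])
          fix x y assume x: "x \<in> B" and y: "y \<in> Y m"
          show "lie x y \<in> OS.span (Y (Suc m))"
          proof (cases "m = 0")
            case True
            then show ?thesis using brB[OF x] y by (simp add: Y_def L_def)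
          next
            case False
            then show ?thesis using brA[OF x] y by (simp add: Y_def L_def)
          qed
        qed
      qed
    qed simp
    moreover have "OS.span (Y (Suc m)) \<subseteq> OS.span ?G"
    proof (rule OS.span_minimal)
      show "Y (Suc m) \<subseteq> OS.span ?G"
      proof
        fix x assume "x \<in> Y (Suc m)"
        then obtain j where j: "Suc m \<le> j" "j \<le> r" "x = F j"
          unfolding YS by auto
        define k where "k = j - 1"
        have jk: "j = Suc k" using j(1) by (simp add: k_def)
        have k: "Suc m \<le> Suc k" "Suc k \<le> r" "x = F (Suc k)" using j jk by auto
        then have kr: "k < r" by simp
        have "F k \<in> Y m" using k by (auto simp: Y_def B_def)
        then have "F k \<in> OS.span (Y m)" by (rule OS.span_base)
        then have "lie D0 (F k) \<in> ?G" using D0g by blast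
        then have "oscale (1 / pair \<gamma> (P k)) (lie D0 (F k)) \<in> OS.span ?G"
          by (rule OS.span_scale[OF OS.span_base])
        then show "x \<in> OS.span ?G" using k(3) Fsuc[OF kr] by simp
      qed
    qed simp
    moreover have "lcs g (Suc m) = OS.span ?G" using Suc.IH by simp
    ultimately show ?case by blast
  qed
  obtain iq where iq: "q iq \<noteq> 0" using assms(2) by (auto simp: fun_eq_iff)
  have Pinj: "P j = P k \<Longrightarrow> j = k" for j k
  proof -
    assume "P j = P k"
    then have "P j iq = P k iq" by simp
    then show "j = k" using iq by (simp add: P_def)
  qed
  have Finj: "inj_on F {0..r}"
    unfolding inj_on_def F_def using Delta_eq[OF assms(3)] Pinj by blast
  have D0notF: "D0 \<notin> F ` {0..r}"
  proof
    assume "D0 \<in> F ` {0..r}"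
    then obtain k where "Delta q \<gamma> = Delta (P k) \<beta>" by (auto simp: D0_def F_def)
    then have "\<gamma> = \<beta>" using Delta_eq[OF assms(4)] by blast
    then show False using assms(6) by (metis (no_types) mult_1)
  qed
  have cardB: "card B = r + 2"
    unfolding B_def using D0notF by (simp add: card_image[OF Finj])
  have indepF: "OS.independent (F ` {0..r})"
  proof -
    have "F ` {0..r} = (\<lambda>a. Delta a \<beta>) ` (P ` {0..r})" by (auto simp: F_def image_image)
    then show ?thesis using indep_Deltas[OF _ assms(3)] by simp
  qed
  have pq_r: "r = 0" if "p = q"
  proof (rule ccontr)
    assume "r \<noteq> 0"
    then have "pair \<gamma> p \<noteq> 0" using cnz[of 0] P0 by simp
    moreover have "pair \<gamma> (P r) = (1 + of_nat r) * pair \<gamma> p" using pairP[of \<gamma> r] that by (simp add: algebra_simps)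
    moreover have "(1 + of_nat r :: 'a) \<noteq> 0"
      by (metis add.commute of_nat_Suc of_nat_eq_0_iff nat.distinct(1))
    ultimately show False using cr by simp
  qed
  have D0notspan: "D0 \<notin> OS.span (F ` {0..r})"
  proof (cases "p = q")
    case True
    then have "r = 0" by (rule pq_r)
    then have "F ` {0..r} = {F 0}" by simp
    then have sp: "OS.span (F ` {0..r}) = range (\<lambda>c. oscale c (F 0))" by (simp add: OS.span_singleton)
    show ?thesis
    proof
      assume "D0 \<in> OS.span (F ` {0..r})"
      then obtain c where "D0 = oscale c (F 0)" using sp by auto
      then have "Delta q \<gamma> = Delta p (\<lambda>i. c * \<beta> i)" by (simp add: D0_def F_def P0 Delta_scale)
      then have "\<gamma> = (\<lambda>i. c * \<beta> i)" using Delta_eq[OF assms(4)] by blast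
      then show False using assms(6) by blast
    qed
  next
    case False
    have Pq: "P k \<noteq> q" for k
    proof
      assume Pk: "P k = q"
      show False
      proof (cases "k = 0")
        case True then show False using Pk P0 False by simp
      next
        case k: False
        have "p i = 0" for i
        proof -
          have "p i + k * q i = q i" using Pk by (simp add: P_def fun_eq_iff)
          moreover have "q i \<le> k * q i" using k by simp
          ultimately show ?thesis by linarith
        qed
        then show False using assms(1) by (auto simp: fun_eq_iff)
      qed
    qed
    define W where "W = {x :: ('n, 'a) kop. \<forall>i. Poly_Mapping.lookup (x (xvar i)) (q + ev i) = 0}"
    have subW: "OS.subspace W"
      unfolding OS.subspace_def W_def by (simp add: lookup_add oscale_def lookup_pscale)
    have "F ` {0..r} \<subseteq> W"
      using Pq by (auto simp: W_def F_def Delta_xvar lookup_single when_def)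
    then have "OS.span (F ` {0..r}) \<subseteq> W" using subW by (rule OS.span_minimal)
    moreover have "D0 \<notin> W"
    proof
      assume "D0 \<in> W"
      obtain i where "\<gamma> i \<noteq> 0" using assms(4) by (auto simp: fun_eq_iff)
      then show False using \<open>D0 \<in> W\<close> by (auto simp: W_def D0_def Delta_xvar)
    qed
    ultimately show ?thesis by blast
  qed
  have indepB: "OS.independent B"
    unfolding B_def by (rule OS.independent_insertI[OF D0notspan indepF])
  have dimg: "OS.dim g = r + 2"
    using geq OS.dim_span_eq_card_independent[OF indepB] cardB by simp
  have lcs_top: "lcs g (r + 1) = {0}" using lcsY[of "r+1"] by (simp add: Y_def)
  have lcs_r: "lcs g r \<noteq> {0}"
  proof (cases "r = 0")
    case True
    then have "D0 \<in> lcs g r" using lcsY[of r] by (simp add: Y_def B_def OS.span_base)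
    moreover have "D0 \<noteq> 0" unfolding D0_def by (rule Delta_nonzero[OF assms(4)])
    ultimately show ?thesis by auto
  next
    case False
    then have "F r \<in> lcs g r" using lcsY[of r] by (simp add: Y_def OS.span_base)
    moreover have "F r \<noteq> 0" unfolding F_def by (rule Delta_nonzero[OF assms(3)])
    ultimately show ?thesis by auto
  qed
  have nil: "step_nilpotent g (r + 1)"
    unfolding step_nilpotent_def using lcs_top lcs_r by simp
  show ?thesis
    unfolding eqB eqg Let_def using dimg nil cardB indepB geq by simp
qed

end
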